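(* For all integers $n\ge1$ the following hold in $\mathbb V$: $$\sum_{k=0}^n G_k\star\tilde G_{n-k}\,q^{n-2k}=q\sum_{k=0}^{n-1}W_{-k}\star W_{n-k}\,q^{n-1-2k}=[2]_q^{n-1}(xy+yx)^{n-1}(qxy+q^{-1}yx),$$ $$\sum_{k=0}^n G_k\star\tilde G_{n-k}\,q^{2k-n}=q\sum_{k=0}^{n-1}W_{n-k}\star W_{-k}\,q^{n-1-2k}=[2]_q^{n-1}(q^{-1}xy+qyx)(xy+yx)^{n-1},$$ $$\sum_{k=0}^n \tilde G_k\star G_{n-k}\,q^{n-2k}=q\sum_{k=0}^{n-1}W_{n-k}\star W_{-k}\,q^{2k+1-n}=[2]_q^{n-1}(xy+yx)^{n-1}(q^{-1}xy+qyx),$$ $$\sum_{k=0}^n \tilde G_k\star G_{n-k}\,q^{2k-n}=q\sum_{k=0}^{n-1}W_{-k}\star W_{n-k}\,q^{2k+1-n}=[2]_q^{n-1}(qxy+q^{-1}yx)(xy+yx)^{n-1}.$$ On the right-hand sides, products and powers are taken in the free (concatenation) product.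
   Context: Let $\mathbb F$ be a field and let $q\in\mathbb F$ be nonzero and not a root of unity. Let $[m]_q=(q^m-q^{-m})/(q-q^{-1})$. Let $\mathbb V$ be the free associative $\mathbb F$-algebra on noncommuting $x,y$, with basis the words (including $1$). Juxtaposition denotes concatenation. Set $\langle x,x\rangle=\langle y,y\rangle=2$ and $\langle x,y\rangle=\langle y,x\rangle=-2$. The $q$-shuffle product $\star$ is the bilinear product determined as follows: - $1\star v=v\star 1=v$; - for nontrivial words $u=u_1\cdots u_r$ and $v=v_1\cdots v_s$, $$u\star v=u_1((u_2\cdots u_r)\star v)+v_1(u\star(v_2\cdots v_s))q^{\langle u_1,v_1\rangle+\cdots+\langle u_r,v_1\rangle}.$$ This makes $\mathbb V$ an associative algebra, the $q$-shuffle algebra. For $k\in\mathbb N$: - $W_{-k}=xyx\cdots x$ is the alternating word of length $2k+1$ beginning and ending with $x$; - $W_{k+1}=yxy\cdots y$ is the alternating word of length $2k+1$ beginning and ending with $y$; - $G_k=yxyx\cdots yx$ is the word of length $2k$; - $\tilde G_k=xyxy\cdots xy$ is the word of length $2k$; - $G_0=\tilde G_0=1$. *)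

theory Defs
  imports Main
begin

datatype letter = X | Y

text \<open>Elements of the free algebra V are represented by their coefficient functions on words
  (all elements occurring below are finitely supported).\<close>
type_synonym 'a vec = "letter list \<Rightarrow> 'a"

definition wd :: "letter list \<Rightarrow> 'a::field vec" where
  "wd u = (\<lambda>w. if w = u then 1 else 0)"

definition vadd :: "'a::field vec \<Rightarrow> 'a vec \<Rightarrow> 'a vec" where
  "vadd f g = (\<lambda>w. f w + g w)"

definition vsmult :: "'a::field \<Rightarrow> 'a vec \<Rightarrow> 'a vec" where
  "vsmult c f = (\<lambda>w. c * f w)"

definition vzero :: "'a::field vec" where
  "vzero = (\<lambda>w. 0)"

definition vsum :: "nat \<Rightarrow> (nat \<Rightarrow> 'a::field vec) \<Rightarrow> 'a vec" where
  "vsum n F = (\<lambda>w. \<Sum>k\<le>n. F k w)"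

definition cat :: "'a::field vec \<Rightarrow> 'a vec \<Rightarrow> 'a vec" where
  "cat f g = (\<lambda>w. \<Sum>i\<le>length w. f (take i w) * g (drop i w))"

fun cpow :: "'a::field vec \<Rightarrow> nat \<Rightarrow> 'a vec" where
  "cpow f 0 = wd []"
| "cpow f (Suc n) = cat f (cpow f n)"

definition prep :: "letter \<Rightarrow> 'a::field vec \<Rightarrow> 'a vec" where
  "prep a f = (\<lambda>w. case w of [] \<Rightarrow> 0 | c # w' \<Rightarrow> if c = a then f w' else 0)"

definition pair :: "letter \<Rightarrow> letter \<Rightarrow> int" where
  "pair a b = (if a = b then 2 else -2)"

fun qshuf :: "'a::field \<Rightarrow> letter list \<Rightarrow> letter list \<Rightarrow> 'a vec" where
  "qshuf q [] v = wd v"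
| "qshuf q (a # u) [] = wd (a # u)"
| "qshuf q (a # u) (b # v) =
     vadd (prep a (qshuf q u (b # v)))
          (vsmult (q powi (\<Sum>c\<leftarrow>a # u. pair c b)) (prep b (qshuf q (a # u) v)))"

fun other :: "letter \<Rightarrow> letter" where
  "other X = Y" | "other Y = X"

fun alt :: "letter \<Rightarrow> nat \<Rightarrow> letter list" where
  "alt a 0 = []"
| "alt a (Suc m) = a # alt (other a) m"

definition Wneg :: "nat \<Rightarrow> letter list" where   \<comment> \<open>W_{-k} = xyx...x, length 2k+1\<close>
  "Wneg k = alt X (2 * k + 1)"
definition Wpos :: "nat \<Rightarrow> letter list" where   \<comment> \<open>W_{k+1} = yxy...y, length 2k+1\<close>
  "Wpos k = alt Y (2 * k + 1)"
definition G :: "nat \<Rightarrow> letter list" where      \<comment> \<open>G_k = yx...yx, length 2k\<close>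
  "G k = alt Y (2 * k)"
definition Gt :: "nat \<Rightarrow> letter list" where     \<comment> \<open>tilde G_k = xy...xy, length 2k\<close>
  "Gt k = alt X (2 * k)"

definition qint :: "'a::field \<Rightarrow> int \<Rightarrow> 'a" where
  "qint q m = (q powi m - q powi (-m)) / (q - inverse q)"

end

theory Submission
  imports Defs
begin

lemma qshuf_Nil_word: "qshuf q u v [] = (if u = [] \<and> v = [] then 1 else 0)"
  by (cases u; cases v) (auto simp: wd_def vadd_def vsmult_def prep_def)

lemma qshuf_right_Nil: "qshuf q u [] = wd u"
  by (cases u) auto

lemma qshuf_cons: "qshuf q u v (c # w) =
   (if u \<noteq> [] \<and> hd u = c then qshuf q (tl u) v w else 0) +
   (if v \<noteq> [] \<and> hd v = c then q powi (sum_list (map (\<lambda>d. pair d (hd v)) u)) * qshuf q u (tl v) w else 0)"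
  by (cases u; cases v) (auto simp: wd_def vadd_def vsmult_def prep_def qshuf_right_Nil)

lemma pair_other: "pair a b + pair (other a) b = 0"
  by (cases a; cases b) (auto simp: pair_def)

lemma alt_exp: "sum_list (map (\<lambda>d. pair d b) (alt a m)) = (if even m then 0 else pair a b)"
proof (induction m arbitrary: a)
  case 0 then show ?case by simp
next
  case (Suc m)
  show ?case using Suc pair_other[of a b] by auto
qed

lemma alt_Suc_hd: "hd (alt a (Suc m)) = a" and alt_Suc_tl: "tl (alt a (Suc m)) = alt (other a) m"
  by auto

lemma alt_eq_Nil: "(alt a m = []) = (m = 0)"
  by (cases m) auto

definition sg :: "'a::field \<Rightarrow> letter \<Rightarrow> nat \<Rightarrow> letter \<Rightarrow> nat \<Rightarrow> nat \<Rightarrow> int \<Rightarrow> int \<Rightarrow> 'a vec" where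
  "sg q a d b e N s t = (\<lambda>w. \<Sum>k\<le>N. q powi (s * int k + t) * qshuf q (alt a (2*k+d)) (alt b (2*(N-k)+e)) w)"

lemma sg_Nil: "sg q a d b e N s t [] = (if d = 0 \<and> e = 0 \<and> N = 0 then q powi t else 0)"
proof -
  have "sg q a d b e N s t [] = (\<Sum>k\<le>N. (if k = 0 \<and> d = 0 \<and> e = 0 \<and> N = 0 then q powi t else 0))"
    unfolding sg_def qshuf_Nil_word by (intro sum.cong) (auto simp: alt_eq_Nil)
  also have "\<dots> = (if d = 0 \<and> e = 0 \<and> N = 0 then q powi t else 0)"
    by (simp add: sum.delta)
  finally show ?thesis .
qed

lemma sg_0: "sg q a 0 b 0 0 s t w = q powi t * (if w = [] then 1 else 0)"
  by (simp add: sg_def wd_def)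

lemma term_cons:
  assumes "d \<le> 1" "e \<le> 1"
  shows "qshuf q (alt a (2*k+d)) (alt b (2*j+e)) (c#w) =
    (if a = c \<and> 2*k+d \<noteq> 0 then qshuf q (alt (other a) (2*k+d-1)) (alt b (2*j+e)) w else 0) +
    (if b = c \<and> 2*j+e \<noteq> 0 then q powi (if d = 1 then pair a b else 0) *
        qshuf q (alt a (2*k+d)) (alt (other b) (2*j+e-1)) w else 0)"
proof -
  have h1: "alt a (2*k+d) \<noteq> [] \<Longrightarrow> hd (alt a (2*k+d)) = a \<and> tl (alt a (2*k+d)) = alt (other a) (2*k+d-1)"
    by (cases "2*k+d") auto
  have h2: "alt b (2*j+e) \<noteq> [] \<Longrightarrow> hd (alt b (2*j+e)) = b \<and> tl (alt b (2*j+e)) = alt (other b) (2*j+e-1)"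
    by (cases "2*j+e") auto
  have h3: "sum_list (map (\<lambda>x. pair x b) (alt a (2*k+d))) = (if d = 1 then pair a b else 0)"
    using assms by (cases "d = 0") (auto simp: alt_exp)
  show ?thesis
    unfolding qshuf_cons using h1 h2 h3 by (auto simp: alt_eq_Nil)
qed

lemma partU:
  assumes "d \<le> 1"
  shows "(\<Sum>k\<le>N. q powi (s * int k + t) * (if a = c \<and> 2*k+d \<noteq> 0 then qshuf q (alt (other a) (2*k+d-1)) (alt b (2*(N-k)+e)) w else 0)) =
    (if a = c then (if d = 1 then sg q (other a) 0 b e N s t w else if N = 0 then 0 else sg q (other a) 1 b e (N-1) s (t+s) w) else 0)"
proof (cases "a = c")
  case False then show ?thesis by simp
next
  case True
  show ?thesis
  proof (cases "d = 1")
    case True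
    then show ?thesis using \<open>a = c\<close> unfolding sg_def by simp
  next
    case False
    then have d0: "d = 0" using assms by simp
    show ?thesis
    proof (cases N)
      case 0 then show ?thesis using d0 by simp
    next
      case (Suc N')
      have "(\<Sum>k\<le>N. q powi (s * int k + t) * (if a = c \<and> 2*k+d \<noteq> 0 then qshuf q (alt (other a) (2*k+d-1)) (alt b (2*(N-k)+e)) w else 0))
        = (\<Sum>k\<le>N'. q powi (s * int (Suc k) + t) * qshuf q (alt (other a) (2*k+1)) (alt b (2*(N'-k)+e)) w)"
        unfolding Suc sum.atMost_Suc_shift using d0 \<open>a = c\<close> by simp
      also have "\<dots> = sg q (other a) 1 b e (N-1) s (t+s) w"
        unfolding sg_def Suc diff_Suc_1
      proof (intro sum.cong refl)
        fix k
        have "s * int (Suc k) + t = s * int k + (t + s)" by (simp add: algebra_simps)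
        then show "q powi (s * int (Suc k) + t) * qshuf q (alt (other a) (2 * k + 1)) (alt b (2 * (N' - k) + e)) w =
         q powi (s * int k + (t + s)) * qshuf q (alt (other a) (2 * k + 1)) (alt b (2 * (N' - k) + e)) w" by (simp only:)
      qed
      finally show ?thesis using d0 \<open>a = c\<close> Suc by simp
    qed
  qed
qed

lemma partV:
  assumes "e \<le> 1" "q \<noteq> 0"
  shows "(\<Sum>k\<le>N. q powi (s * int k + t) * (if b = c \<and> 2*(N-k)+e \<noteq> 0 then q powi E *
        qshuf q (alt a (2*k+d)) (alt (other b) (2*(N-k)+e-1)) w else 0)) =
    (if b = c then (if e = 1 then sg q a d (other b) 0 N s (t + E) w else if N = 0 then 0 else sg q a d (other b) 1 (N-1) s (t+E) w) else 0)"
proof (cases "b = c")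
  case False then show ?thesis by simp
next
  case True
  have pw: "q powi (s * int k + t) * (q powi E * z) = q powi (s * int k + (t + E)) * z" for k z
    using assms(2) by (simp add: power_int_add algebra_simps)
  show ?thesis
  proof (cases "e = 1")
    case True
    then show ?thesis using \<open>b = c\<close> unfolding sg_def by (simp add: pw)
  next
    case False
    then have e0: "e = 0" using assms by simp
    show ?thesis
    proof (cases N)
      case 0 then show ?thesis using e0 by simp
    next
      case (Suc N')
      have "(\<Sum>k\<le>N. q powi (s * int k + t) * (if b = c \<and> 2*(N-k)+e \<noteq> 0 then q powi E *
        qshuf q (alt a (2*k+d)) (alt (other b) (2*(N-k)+e-1)) w else 0))
        = (\<Sum>k\<le>N'. q powi (s * int k + t) * (q powi E * qshuf q (alt a (2*k+d)) (alt (other b) (2*(N'-k)+1)) w))"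
        unfolding Suc sum.atMost_Suc using e0 \<open>b = c\<close>
        apply simp
        apply (intro sum.cong refl)
        apply (auto simp: Suc_diff_le)
        done
      also have "\<dots> = sg q a d (other b) 1 (N-1) s (t+E) w"
        unfolding sg_def Suc diff_Suc_1 by (intro sum.cong refl) (simp add: pw)
      finally show ?thesis using e0 \<open>b = c\<close> Suc by simp
    qed
  qed
qed

lemma sg_cons:
  assumes "d \<le> 1" "e \<le> 1" "q \<noteq> 0"
  shows "sg q a d b e N s t (c#w) =
    (if a = c then (if d = 1 then sg q (other a) 0 b e N s t w else if N = 0 then 0 else sg q (other a) 1 b e (N-1) s (t+s) w) else 0) +
    (if b = c then (if e = 1 then sg q a d (other b) 0 N s (t + (if d = 1 then pair a b else 0)) w
       else if N = 0 then 0 else sg q a d (other b) 1 (N-1) s (t + (if d = 1 then pair a b else 0)) w) else 0)"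
proof -
  have "sg q a d b e N s t (c#w) =
    (\<Sum>k\<le>N. q powi (s * int k + t) * (if a = c \<and> 2*k+d \<noteq> 0 then qshuf q (alt (other a) (2*k+d-1)) (alt b (2*(N-k)+e)) w else 0)) +
    (\<Sum>k\<le>N. q powi (s * int k + t) * (if b = c \<and> 2*(N-k)+e \<noteq> 0 then q powi (if d = 1 then pair a b else 0) *
        qshuf q (alt a (2*k+d)) (alt (other b) (2*(N-k)+e-1)) w else 0))"
    unfolding sg_def term_cons[OF assms(1,2)] by (simp add: distrib_left sum.distrib)
  then show ?thesis by (simp only: partU[OF assms(1)] partV[OF assms(2,3)])
qed


lemma wd_Cons: "wd (a # u) = prep a (wd u)"
  by (rule ext) (auto simp: wd_def prep_def split: list.split)

lemma prep_Cons [simp]: "prep a f (c # w) = (if c = a then f w else 0)"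
  and prep_Nil [simp]: "prep a f [] = 0"
  by (auto simp: prep_def)

lemma cat_prep: "cat (prep a f) g = prep a (cat f g)"
proof (rule ext)
  fix w :: "letter list"
  show "cat (prep a f) g w = prep a (cat f g) w"
  proof (cases w)
    case Nil then show ?thesis by (simp add: cat_def)
  next
    case (Cons c w')
    show ?thesis unfolding Cons cat_def
      by (simp add: sum.atMost_Suc_shift del: sum.atMost_Suc)
  qed
qed

lemma cat_wd_Nil: "cat (wd []) g = g"
proof (rule ext)
  fix w :: "letter list"
  show "cat (wd []) g w = g w"
    unfolding cat_def
    by (cases w) (simp_all add: sum.atMost_Suc_shift wd_def del: sum.atMost_Suc)
qed

lemma cat_vadd: "cat (vadd f g) h = vadd (cat f h) (cat g h)"
  by (rule ext) (simp add: cat_def vadd_def distrib_right sum.distrib)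

lemma cat_vsmult: "cat (vsmult c f) h = vsmult c (cat f h)"
  by (rule ext) (simp add: cat_def vsmult_def sum_distrib_left mult.assoc)

definition Sv :: "'a::field vec" where "Sv = vadd (wd [X, Y]) (wd [Y, X])"
definition Tm :: "'a::field \<Rightarrow> 'a \<Rightarrow> 'a vec" where
  "Tm \<alpha> \<beta> = vadd (vsmult \<alpha> (wd [X, Y])) (vsmult \<beta> (wd [Y, X]))"

lemma catS: "cat Sv P = vadd (prep X (prep Y P)) (prep Y (prep X P))"
  unfolding Sv_def cat_vadd wd_Cons cat_prep cat_wd_Nil ..

lemma catT: "cat (Tm \<alpha> \<beta>) P = vadd (vsmult \<alpha> (prep X (prep Y P))) (vsmult \<beta> (prep Y (prep X P)))"
  unfolding Tm_def cat_vadd cat_vsmult wd_Cons cat_prep cat_wd_Nil ..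

lemma cat_cpow_Suc: "cat (cpow Sv (Suc j)) T = vadd (prep X (prep Y (cat (cpow Sv j) T))) (prep Y (prep X (cat (cpow Sv j) T)))"
  by (simp add: catS cat_vadd cat_prep)

definition RL :: "'a::field \<Rightarrow> 'a vec \<Rightarrow> nat \<Rightarrow> 'a vec" where
  "RL q T n = vsmult (qint q 2 ^ (n - 1)) (cat (cpow Sv (n - 1)) T)"
definition RR :: "'a::field \<Rightarrow> 'a vec \<Rightarrow> nat \<Rightarrow> 'a vec" where
  "RR q T n = vsmult (qint q 2 ^ (n - 1)) (cat T (cpow Sv (n - 1)))"

lemma qint2: assumes "(q::'a::field) \<noteq> 0" "q ^ 2 \<noteq> 1" shows "qint q 2 = q + inverse q"
proof -
  have ne: "q - inverse q \<noteq> 0"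
  proof
    assume "q - inverse q = 0"
    then have "q * q = q * inverse q" by simp
    then have "q ^ 2 = 1" using assms(1) by (simp add: power2_eq_square)
    then show False using assms(2) by simp
  qed
  have "q powi 2 - q powi (-2) = (q - inverse q) * (q + inverse q)"
    using assms(1) by (simp add: power_int_minus power2_eq_square algebra_simps field_simps)
  then show ?thesis unfolding qint_def using ne by simp
qed


lemma words3: obtains c1 c2 w' where "w = c1 # c2 # w'" | c where "w = [c]" | "w = []"
  by (metis list.exhaust)

lemma words6: obtains w' where "w = X # X # w'" | w' where "w = X # Y # w'" | w' where "w = Y # X # w'"
  | w' where "w = Y # Y # w'" | c where "w = [c]" | "w = []"
proof -
  consider c1 c2 w' where "w = c1 # c2 # w'" | c where "w = [c]" | "w = []" by (rule words3)
  then show ?thesis using that by (cases; metis letter.exhaust)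
qed

lemma cpow_Suc_Sv: "cpow Sv (Suc j) w = prep X (prep Y (cpow Sv j)) w + prep Y (prep X (cpow Sv j)) w"
  by (simp add: catS vadd_def)

lemma wd_Nil_val: "wd [] w = (if w = [] then 1 else 0)"
  by (simp add: wd_def)

lemma Tm_val: "Tm \<alpha> \<beta> w = \<alpha> * wd [X, Y] w + \<beta> * wd [Y, X] w"
  by (simp add: Tm_def vadd_def vsmult_def)

definition PP :: "'a::field \<Rightarrow> nat \<Rightarrow> bool" where
 "PP q j \<longleftrightarrow>
   (\<forall>t w. sg q Y 0 X 0 (Suc j) (-2) t w = q powi (t - int (Suc j)) * RL q (Tm q (inverse q)) (Suc j) w) \<and>
   (\<forall>t w. sg q X (Suc 0) Y (Suc 0) j (-2) t w = q powi (t - int (Suc j)) * RL q (Tm q (inverse q)) (Suc j) w) \<and>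
   (\<forall>t w. sg q Y 0 X 0 (Suc j) 2 t w = q powi (t + int (Suc j)) * RR q (Tm (inverse q) q) (Suc j) w) \<and>
   (\<forall>t w. sg q Y (Suc 0) X (Suc 0) j 2 t w = q powi (t + int (Suc j) - 2) * RR q (Tm (inverse q) q) (Suc j) w) \<and>
   (\<forall>t w. sg q X 0 Y 0 (Suc j) (-2) t w = q powi (t - int (Suc j)) * RL q (Tm (inverse q) q) (Suc j) w) \<and>
   (\<forall>t w. sg q Y (Suc 0) X (Suc 0) j (-2) t w = q powi (t - int (Suc j)) * RL q (Tm (inverse q) q) (Suc j) w) \<and>
   (\<forall>t w. sg q X 0 Y 0 (Suc j) 2 t w = q powi (t + int (Suc j)) * RR q (Tm q (inverse q)) (Suc j) w) \<and>
   (\<forall>t w. sg q X (Suc 0) Y (Suc 0) j 2 t w = q powi (t + int (Suc j) - 2) * RR q (Tm q (inverse q)) (Suc j) w)"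

lemma PP_0:
  fixes q :: "'a::field"
  assumes q0: "q \<noteq> 0" and q2: "q ^ 2 \<noteq> 1"
  shows "PP q 0"
  unfolding PP_def
  apply (intro conjI allI; case_tac w rule: words6)
  apply (simp_all add: sg_cons q0 sg_Nil sg_0 RL_def RR_def vsmult_def vadd_def cat_wd_Nil catT Tm_val wd_Cons wd_Nil_val
          pair_def power_int_add power_int_diff)
  apply (simp_all add: field_simps q0 eval_nat_numeral)
  done

lemma PP_Suc:
  fixes q :: "'a::field"
  assumes q0: "q \<noteq> 0" and q2: "q ^ 2 \<noteq> 1" and IH: "PP q j"
  shows "PP q (Suc j)"
proof -
  note I = IH[unfolded PP_def, THEN conjunct1, rule_format]
   IH[unfolded PP_def, THEN conjunct2, THEN conjunct1, rule_format]
   IH[unfolded PP_def, THEN conjunct2, THEN conjunct2, THEN conjunct1, rule_format]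
   IH[unfolded PP_def, THEN conjunct2, THEN conjunct2, THEN conjunct2, THEN conjunct1, rule_format]
   IH[unfolded PP_def, THEN conjunct2, THEN conjunct2, THEN conjunct2, THEN conjunct2, THEN conjunct1, rule_format]
   IH[unfolded PP_def, THEN conjunct2, THEN conjunct2, THEN conjunct2, THEN conjunct2, THEN conjunct2, THEN conjunct1, rule_format]
   IH[unfolded PP_def, THEN conjunct2, THEN conjunct2, THEN conjunct2, THEN conjunct2, THEN conjunct2, THEN conjunct2, THEN conjunct1, rule_format]
   IH[unfolded PP_def, THEN conjunct2, THEN conjunct2, THEN conjunct2, THEN conjunct2, THEN conjunct2, THEN conjunct2, THEN conjunct2, rule_format]
  show ?thesis
  unfolding PP_def
  apply (intro conjI allI; case_tac w rule: words6)
  apply (simp_all add: sg_cons q0 sg_Nil I RL_def RR_def vsmult_def vadd_def cat_cpow_Suc catT catS qint2[OF q0 q2] pair_def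
          power_int_add power_int_diff cpow_Suc_Sv del: cpow.simps)
  apply (simp_all add: field_simps q0 eval_nat_numeral)
  done
qed


lemma qmul: "(q::'a::field) \<noteq> 0 \<Longrightarrow> a + 1 = b \<Longrightarrow> q * (q powi a * z) = q powi b * z"
  using power_int_add_1'[of q a] by (simp add: mult.assoc)

lemma pwcong: "a = b \<Longrightarrow> (q::'a::field) powi a * z = q powi b * z" by simp

lemma br1: "vsum n (\<lambda>k. vsmult (q powi (int n - 2 * int k)) (qshuf q (G k) (Gt (n - k)))) = sg q Y 0 X 0 n (-2) (int n)"
  unfolding vsum_def vsmult_def sg_def G_def Gt_def
  by (intro ext sum.cong refl pwcong) simp

lemma br3: "vsum n (\<lambda>k. vsmult (q powi (2 * int k - int n)) (qshuf q (G k) (Gt (n - k)))) = sg q Y 0 X 0 n 2 (- int n)"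
  unfolding vsum_def vsmult_def sg_def G_def Gt_def
  by (intro ext sum.cong refl pwcong) simp

lemma br5: "vsum n (\<lambda>k. vsmult (q powi (int n - 2 * int k)) (qshuf q (Gt k) (G (n - k)))) = sg q X 0 Y 0 n (-2) (int n)"
  unfolding vsum_def vsmult_def sg_def G_def Gt_def
  by (intro ext sum.cong refl pwcong) simp

lemma br7: "vsum n (\<lambda>k. vsmult (q powi (2 * int k - int n)) (qshuf q (Gt k) (G (n - k)))) = sg q X 0 Y 0 n 2 (- int n)"
  unfolding vsum_def vsmult_def sg_def G_def Gt_def
  by (intro ext sum.cong refl pwcong) simp

lemma br2: "(q::'a::field) \<noteq> 0 \<Longrightarrow> vsmult q (vsum (Suc N - 1) (\<lambda>k. vsmult (q powi (int (Suc N) - 1 - 2 * int k))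
                                 (qshuf q (Wneg k) (Wpos (Suc N - k - 1))))) = sg q X (Suc 0) Y (Suc 0) N (-2) (int (Suc N))"
  unfolding vsum_def vsmult_def sg_def Wneg_def Wpos_def
  by (intro ext) (auto simp: sum_distrib_left intro!: sum.cong qmul)

lemma br8: "(q::'a::field) \<noteq> 0 \<Longrightarrow> vsmult q (vsum (Suc N - 1) (\<lambda>k. vsmult (q powi (2 * int k + 1 - int (Suc N)))
                                 (qshuf q (Wneg k) (Wpos (Suc N - k - 1))))) = sg q X (Suc 0) Y (Suc 0) N 2 (2 - int (Suc N))"
  unfolding vsum_def vsmult_def sg_def Wneg_def Wpos_def
  by (intro ext) (auto simp: sum_distrib_left intro!: sum.cong qmul)

lemma rev_atMost: "(\<Sum>k\<le>N. f (N - k)) = (\<Sum>k\<le>(N::nat). f k)"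
  using sum.nat_diff_reindex[of f "Suc N"] by (simp add: lessThan_Suc_atMost)

lemma br4: "(q::'a::field) \<noteq> 0 \<Longrightarrow> vsmult q (vsum (Suc N - 1) (\<lambda>k. vsmult (q powi (int (Suc N) - 1 - 2 * int k))
                                 (qshuf q (Wpos (Suc N - k - 1)) (Wneg k)))) = sg q Y (Suc 0) X (Suc 0) N 2 (2 - int (Suc N))"
proof (rule ext)
  fix w
  assume q0: "q \<noteq> 0"
  define F where "F = (\<lambda>k. q * (q powi (int (Suc N) - 1 - 2 * int k) * qshuf q (Wpos (N - k)) (Wneg k) w))"
  have "vsmult q (vsum (Suc N - 1) (\<lambda>k. vsmult (q powi (int (Suc N) - 1 - 2 * int k))
                                 (qshuf q (Wpos (Suc N - k - 1)) (Wneg k)))) w = (\<Sum>k\<le>N. F k)"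
    unfolding vsum_def vsmult_def F_def by (simp add: sum_distrib_left)
  also have "\<dots> = (\<Sum>k\<le>N. F (N - k))" by (rule rev_atMost[symmetric])
  also have "\<dots> = sg q Y (Suc 0) X (Suc 0) N 2 (2 - int (Suc N)) w"
    unfolding sg_def
  proof (intro sum.cong refl)
    fix k assume "k \<in> {..N}"
    then have kN: "N - (N - k) = k" by simp
    show "F (N - k) = q powi (2 * int k + (2 - int (Suc N))) * qshuf q (alt Y (2 * k + Suc 0)) (alt X (2 * (N - k) + Suc 0)) w"
      unfolding F_def kN Wneg_def Wpos_def One_nat_def using \<open>k \<in> {..N}\<close> by (intro qmul q0) auto
  qed
  finally show "vsmult q (vsum (Suc N - 1) (\<lambda>k. vsmult (q powi (int (Suc N) - 1 - 2 * int k))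
                                 (qshuf q (Wpos (Suc N - k - 1)) (Wneg k)))) w = sg q Y (Suc 0) X (Suc 0) N 2 (2 - int (Suc N)) w" .
qed

lemma br6: "(q::'a::field) \<noteq> 0 \<Longrightarrow> vsmult q (vsum (Suc N - 1) (\<lambda>k. vsmult (q powi (2 * int k + 1 - int (Suc N)))
                                 (qshuf q (Wpos (Suc N - k - 1)) (Wneg k)))) = sg q Y (Suc 0) X (Suc 0) N (-2) (int (Suc N))"
proof (rule ext)
  fix w
  assume q0: "q \<noteq> 0"
  define F where "F = (\<lambda>k. q * (q powi (2 * int k + 1 - int (Suc N)) * qshuf q (Wpos (N - k)) (Wneg k) w))"
  have "vsmult q (vsum (Suc N - 1) (\<lambda>k. vsmult (q powi (2 * int k + 1 - int (Suc N)))
                                 (qshuf q (Wpos (Suc N - k - 1)) (Wneg k)))) w = (\<Sum>k\<le>N. F k)"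
    unfolding vsum_def vsmult_def F_def by (simp add: sum_distrib_left)
  also have "\<dots> = (\<Sum>k\<le>N. F (N - k))" by (rule rev_atMost[symmetric])
  also have "\<dots> = sg q Y (Suc 0) X (Suc 0) N (-2) (int (Suc N)) w"
    unfolding sg_def
  proof (intro sum.cong refl)
    fix k assume "k \<in> {..N}"
    then have kN: "N - (N - k) = k" by simp
    show "F (N - k) = q powi (-2 * int k + int (Suc N)) * qshuf q (alt Y (2 * k + Suc 0)) (alt X (2 * (N - k) + Suc 0)) w"
      unfolding F_def kN Wneg_def Wpos_def One_nat_def using \<open>k \<in> {..N}\<close> by (intro qmul q0) auto
  qed
  finally show "vsmult q (vsum (Suc N - 1) (\<lambda>k. vsmult (q powi (2 * int k + 1 - int (Suc N)))
                                 (qshuf q (Wpos (Suc N - k - 1)) (Wneg k)))) w = sg q Y (Suc 0) X (Suc 0) N (-2) (int (Suc N)) w" .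
qed


theorem proposition12p6:
  fixes q :: "'a::field" and n :: nat
  assumes hq0: "q \<noteq> 0"
    and hroot: "\<forall>m::nat. m > 0 \<longrightarrow> q ^ m \<noteq> 1"
    and hn: "n \<ge> 1"
  defines "S \<equiv> vadd (wd [X, Y]) (wd [Y, X])"
  shows
   "vsum n (\<lambda>k. vsmult (q powi (int n - 2 * int k)) (qshuf q (G k) (Gt (n - k))))
      = vsmult q (vsum (n - 1) (\<lambda>k. vsmult (q powi (int n - 1 - 2 * int k))
                                 (qshuf q (Wneg k) (Wpos (n - k - 1)))))
    \<and> vsmult q (vsum (n - 1) (\<lambda>k. vsmult (q powi (int n - 1 - 2 * int k))
                                 (qshuf q (Wneg k) (Wpos (n - k - 1)))))
      = vsmult (qint q 2 ^ (n - 1))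
          (cat (cpow S (n - 1)) (vadd (vsmult q (wd [X, Y])) (vsmult (inverse q) (wd [Y, X]))))
    \<and> vsum n (\<lambda>k. vsmult (q powi (2 * int k - int n)) (qshuf q (G k) (Gt (n - k))))
      = vsmult q (vsum (n - 1) (\<lambda>k. vsmult (q powi (int n - 1 - 2 * int k))
                                 (qshuf q (Wpos (n - k - 1)) (Wneg k))))
    \<and> vsmult q (vsum (n - 1) (\<lambda>k. vsmult (q powi (int n - 1 - 2 * int k))
                                 (qshuf q (Wpos (n - k - 1)) (Wneg k))))
      = vsmult (qint q 2 ^ (n - 1))
          (cat (vadd (vsmult (inverse q) (wd [X, Y])) (vsmult q (wd [Y, X]))) (cpow S (n - 1)))
    \<and> vsum n (\<lambda>k. vsmult (q powi (int n - 2 * int k)) (qshuf q (Gt k) (G (n - k))))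
      = vsmult q (vsum (n - 1) (\<lambda>k. vsmult (q powi (2 * int k + 1 - int n))
                                 (qshuf q (Wpos (n - k - 1)) (Wneg k))))
    \<and> vsmult q (vsum (n - 1) (\<lambda>k. vsmult (q powi (2 * int k + 1 - int n))
                                 (qshuf q (Wpos (n - k - 1)) (Wneg k))))
      = vsmult (qint q 2 ^ (n - 1))
          (cat (cpow S (n - 1)) (vadd (vsmult (inverse q) (wd [X, Y])) (vsmult q (wd [Y, X]))))
    \<and> vsum n (\<lambda>k. vsmult (q powi (2 * int k - int n)) (qshuf q (Gt k) (G (n - k))))
      = vsmult q (vsum (n - 1) (\<lambda>k. vsmult (q powi (2 * int k + 1 - int n))
                                 (qshuf q (Wneg k) (Wpos (n - k - 1)))))
    \<and> vsmult q (vsum (n - 1) (\<lambda>k. vsmult (q powi (2 * int k + 1 - int n))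
                                 (qshuf q (Wneg k) (Wpos (n - k - 1)))))
      = vsmult (qint q 2 ^ (n - 1))
          (cat (vadd (vsmult q (wd [X, Y])) (vsmult (inverse q) (wd [Y, X]))) (cpow S (n - 1)))"
proof -
  have q2: "q ^ 2 \<noteq> 1" using hroot by auto
  obtain j where nj: "n = Suc j" using hn by (cases n) auto
  have P: "PP q j"
  proof (induction j)
    case 0 show ?case by (rule PP_0[OF hq0 q2])
  next
    case (Suc j) then show ?case by (rule PP_Suc[OF hq0 q2])
  qed
  note PPD = P[unfolded PP_def]
  have I1: "sg q Y 0 X 0 (Suc j) (-2) (int (Suc j)) = RL q (Tm q (inverse q)) (Suc j)"
    using PPD by (intro ext) simp
  have I2: "sg q X (Suc 0) Y (Suc 0) j (-2) (int (Suc j)) = RL q (Tm q (inverse q)) (Suc j)"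
    using PPD by (intro ext) simp
  have I3: "sg q Y 0 X 0 (Suc j) 2 (- int (Suc j)) = RR q (Tm (inverse q) q) (Suc j)"
    using PPD by (intro ext) simp
  have I4: "sg q Y (Suc 0) X (Suc 0) j 2 (2 - int (Suc j)) = RR q (Tm (inverse q) q) (Suc j)"
    using PPD by (intro ext) simp
  have I5: "sg q X 0 Y 0 (Suc j) (-2) (int (Suc j)) = RL q (Tm (inverse q) q) (Suc j)"
    using PPD by (intro ext) simp
  have I6: "sg q Y (Suc 0) X (Suc 0) j (-2) (int (Suc j)) = RL q (Tm (inverse q) q) (Suc j)"
    using PPD by (intro ext) simp
  have I7: "sg q X 0 Y 0 (Suc j) 2 (- int (Suc j)) = RR q (Tm q (inverse q)) (Suc j)"
    using PPD by (intro ext) simp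
  have I8: "sg q X (Suc 0) Y (Suc 0) j 2 (2 - int (Suc j)) = RR q (Tm q (inverse q)) (Suc j)"
    using PPD by (intro ext) simp
  have RLe: "RL q T (Suc j) = vsmult (qint q 2 ^ (Suc j - 1)) (cat (cpow S (Suc j - 1)) T)" for T
    by (simp add: RL_def S_def Sv_def)
  have RRe: "RR q T (Suc j) = vsmult (qint q 2 ^ (Suc j - 1)) (cat T (cpow S (Suc j - 1)))" for T
    by (simp add: RR_def S_def Sv_def)
  show ?thesis
    unfolding nj br1 br3 br5 br7 br2[OF hq0] br4[OF hq0] br6[OF hq0] br8[OF hq0] I1 I2 I3 I4 I5 I6 I7 I8 RLe RRe Tm_def
    by simp
qed

end
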